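(* Let $G=(V,E)$ be a temporal network with nonnegative timestamps, let $\pi$ be an ordering of $V$, and let $\delta\ge 0$. Let $e=(u,v,t)\in E$ with $\pi(u)<\pi(v)$, and let $w\in N^{-}_{\pi}(u)\cap N(v)$. Put $L_2=E_{u,w}$ and $L_3=E_{v,w}$, and for $f\in L_2$ let $L_{23}[f]$ be the first edge of $L_3$ (in sorted order) whose timestamp is at least $t(f)$. Define the collection of intervals $$I_{w,u,v}=\big\{\,[\max\{0,\,t(L_{23}[f])-\delta\},\ t(f)]\ :\ f\in L_2,\ L_{23}[f]\text{ exists},\ t(f)\le t(L_{23}[f])\le t(f)+\delta\,\big\}.$$ Then $e$ forms at least one $\delta$-temporal triangle with $w$ if and only if some interval in $I_{w,u,v}$ contains $t=t(e)$.
   Context: A temporal network $G=(V,E)$ is a finite multiset of temporal edges $(x,y,t)$ with $x\neq y\in V$ and timestamp $t=t(e)$ (from $x$ to $y$; parallel edges in both directions allowed). For distinct $x,y$, $E_{x,y}$ is the list of temporal edges from $x$ to $y$ sorted by increasing timestamp. $G_S$ is the simple undirected graph on $V$ with $\{x,y\}$ an edge iff some temporal edge joins $x$ and $y$; $N(x)$ is the neighbourhood of $x$ in $G_S$. For an ordering $\pi$ of $V$, $N^{-}_{\pi}(x)=\{y\in N(x):\pi(y)<\pi(x)\}$. For $\delta\ge 0$, a temporal edge $e=(a,b,t)$ forms a $\delta$-temporal triangle with a vertex $c$ if there exist temporal edges $(a,c,t_2)$ and $(b,c,t_3)$ in $E$ with $t\le t_2\le t_3\le t+\delta$. *)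

theory Defs
  imports Complex_Main "HOL-Library.Multiset"
begin

type_synonym 'v tedge = "'v \<times> 'v \<times> real"

definition src :: "'v tedge \<Rightarrow> 'v" where "src e = fst e"
definition dst :: "'v tedge \<Rightarrow> 'v" where "dst e = fst (snd e)"
definition tstamp :: "'v tedge \<Rightarrow> real" where "tstamp e = snd (snd e)"

definition temporal_network :: "'v set \<Rightarrow> 'v tedge multiset \<Rightarrow> bool" where
  "temporal_network V E \<longleftrightarrow> finite V \<and>
     (\<forall>e \<in># E. src e \<in> V \<and> dst e \<in> V \<and> src e \<noteq> dst e)"

definition edge_list :: "'v tedge multiset \<Rightarrow> 'v \<Rightarrow> 'v \<Rightarrow> 'v tedge list" where
  "edge_list E x y = (SOME xs. mset xs = filter_mset (\<lambda>e. src e = x \<and> dst e = y) E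
                               \<and> sorted (map tstamp xs))"

definition nbhd :: "'v tedge multiset \<Rightarrow> 'v \<Rightarrow> 'v set" where
  "nbhd E x = {y. \<exists>e \<in># E. (src e = x \<and> dst e = y) \<or> (src e = y \<and> dst e = x)}"

definition lower_nbhd :: "'v tedge multiset \<Rightarrow> ('v \<Rightarrow> nat) \<Rightarrow> 'v \<Rightarrow> 'v set" where
  "lower_nbhd E \<pi> x = {y \<in> nbhd E x. \<pi> y < \<pi> x}"

definition forms_triangle :: "'v tedge multiset \<Rightarrow> real \<Rightarrow> 'v tedge \<Rightarrow> 'v \<Rightarrow> bool" where
  "forms_triangle E \<delta> e c \<longleftrightarrow> (\<exists>t2 t3. (src e, c, t2) \<in># E \<and> (dst e, c, t3) \<in># E \<and>
      tstamp e \<le> t2 \<and> t2 \<le> t3 \<and> t3 \<le> tstamp e + \<delta>)"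

definition first_after :: "'v tedge list \<Rightarrow> 'v tedge \<Rightarrow> 'v tedge option" where
  "first_after L3 f = find (\<lambda>g. tstamp g \<ge> tstamp f) L3"

definition interval_collection ::
  "'v tedge multiset \<Rightarrow> real \<Rightarrow> 'v \<Rightarrow> 'v \<Rightarrow> 'v \<Rightarrow> real set set" where
  "interval_collection E \<delta> w u v =
     (let L2 = edge_list E u w; L3 = edge_list E v w in
      {{max 0 (tstamp g - \<delta>) .. tstamp f} | f g.
         f \<in> set L2 \<and> first_after L3 f = Some g \<and>
         tstamp f \<le> tstamp g \<and> tstamp g \<le> tstamp f + \<delta>})"

end

theory Submission
  imports Defs
begin

lemma edge_list_props:
  "mset (edge_list E x y) = filter_mset (\<lambda>e. src e = x \<and> dst e = y) E
   \<and> sorted (map tstamp (edge_list E x y))"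
proof -
  obtain xs where xs: "mset xs = filter_mset (\<lambda>e. src e = x \<and> dst e = y) E"
    using ex_mset by blast
  let ?ys = "sort_key tstamp xs"
  have "mset ?ys = filter_mset (\<lambda>e. src e = x \<and> dst e = y) E \<and> sorted (map tstamp ?ys)"
    using xs by (simp add: sorted_sort_key)
  then show ?thesis unfolding edge_list_def by (rule someI)
qed

lemma in_edge_list: "e \<in> set (edge_list E x y) \<longleftrightarrow> e \<in># E \<and> src e = x \<and> dst e = y"
proof -
  have "e \<in> set (edge_list E x y) \<longleftrightarrow> e \<in># mset (edge_list E x y)" by simp
  also have "\<dots> \<longleftrightarrow> e \<in># E \<and> src e = x \<and> dst e = y"
    using edge_list_props[of E x y] by simp
  finally show ?thesis .
qed

lemma first_after_some:
  assumes "first_after L f = Some g"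
  shows "g \<in> set L \<and> tstamp g \<ge> tstamp f"
  using assms unfolding first_after_def by (auto simp: find_Some_iff)

lemma first_after_min:
  assumes "sorted (map tstamp L)" "g' \<in> set L" "tstamp g' \<ge> tstamp f"
  shows "\<exists>g. first_after L f = Some g \<and> tstamp g \<le> tstamp g'"
proof -
  have ne: "find (\<lambda>g. tstamp g \<ge> tstamp f) L \<noteq> None"
    using assms(2,3) unfolding find_None_iff by blast
  then obtain g where g: "find (\<lambda>g. tstamp g \<ge> tstamp f) L = Some g" by auto
  then obtain i where i: "i < length L" "g = L ! i" "tstamp g \<ge> tstamp f"
      "\<forall>j<i. \<not> tstamp (L ! j) \<ge> tstamp f"
    by (auto simp: find_Some_iff)
  obtain k where k: "k < length L" "g' = L ! k" using assms(2) by (auto simp: in_set_conv_nth)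
  have "i \<le> k" using i(4) k assms(3) by (meson not_le)
  then have "map tstamp L ! i \<le> map tstamp L ! k"
    using assms(1) k(1) by (intro sorted_nth_mono) auto
  then have "tstamp g \<le> tstamp g'" using i k by simp
  then show ?thesis using g unfolding first_after_def by auto
qed

theorem theorem3p4:
  fixes V :: "'v set" and E :: "'v tedge multiset" and \<pi> :: "'v \<Rightarrow> nat"
    and \<delta> :: real and u v w :: 'v and t :: real
  assumes "temporal_network V E"
    and "\<forall>e \<in># E. tstamp e \<ge> 0"
    and "inj_on \<pi> V"
    and "\<delta> \<ge> 0"
    and "(u, v, t) \<in># E"
    and "\<pi> u < \<pi> v"
    and "w \<in> lower_nbhd E \<pi> u \<inter> nbhd E v"
  shows "forms_triangle E \<delta> (u, v, t) w \<longleftrightarrow>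
         (\<exists>I \<in> interval_collection E \<delta> w u v. t \<in> I)"
proof
  assume "forms_triangle E \<delta> (u, v, t) w"
  then obtain t2 t3 where h: "(u, w, t2) \<in># E" "(v, w, t3) \<in># E" "t \<le> t2" "t2 \<le> t3" "t3 \<le> t + \<delta>"
    by (auto simp: forms_triangle_def src_def dst_def tstamp_def)
  let ?f = "(u, w, t2)"
  have f: "?f \<in> set (edge_list E u w)" using h by (simp add: in_edge_list src_def dst_def)
  have g': "(v, w, t3) \<in> set (edge_list E v w)" using h by (simp add: in_edge_list src_def dst_def)
  obtain g where g: "first_after (edge_list E v w) ?f = Some g" "tstamp g \<le> t3"
    using first_after_min[OF conjunct2[OF edge_list_props] g', of ?f] h by (auto simp: tstamp_def)
  have gf: "tstamp g \<ge> t2" using first_after_some[OF g(1)] by (simp add: tstamp_def)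
  have t0: "t \<ge> 0" using assms(2,5) by (auto simp: tstamp_def)
  have "{max 0 (tstamp g - \<delta>) .. tstamp ?f} \<in> interval_collection E \<delta> w u v"
  proof -
    have "tstamp ?f \<le> tstamp g" "tstamp g \<le> tstamp ?f + \<delta>" using gf g h by (auto simp: tstamp_def)
    then show ?thesis unfolding interval_collection_def Let_def using f g(1) by blast
  qed
  moreover have "t \<in> {max 0 (tstamp g - \<delta>) .. tstamp ?f}" using h g gf t0 by (auto simp: tstamp_def)
  ultimately show "\<exists>I \<in> interval_collection E \<delta> w u v. t \<in> I" by blast
next
  assume "\<exists>I \<in> interval_collection E \<delta> w u v. t \<in> I"
  then obtain f g where fg: "f \<in> set (edge_list E u w)" "first_after (edge_list E v w) f = Some g"
      "tstamp f \<le> tstamp g" "tstamp g \<le> tstamp f + \<delta>" "t \<in> {max 0 (tstamp g - \<delta>) .. tstamp f}"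
    unfolding interval_collection_def Let_def by blast
  have g: "g \<in> set (edge_list E v w)" using first_after_some[OF fg(2)] by simp
  obtain a b t2 where fe: "f = (a, b, t2)" by (cases f) auto
  obtain c d t3 where ge: "g = (c, d, t3)" by (cases g) auto
  show "forms_triangle E \<delta> (u, v, t) w"
  proof -
    have "(u, w, t2) \<in># E" "(v, w, t3) \<in># E" "t \<le> t2" "t2 \<le> t3" "t3 \<le> t + \<delta>"
      using fg g fe ge by (auto simp: in_edge_list src_def dst_def tstamp_def)
    then show ?thesis unfolding forms_triangle_def by (auto simp: src_def dst_def tstamp_def)
  qed
qed

end
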